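(* For every integer $n \geqslant 5$, the line graph $L(K_n)$ of the complete graph $K_n$ is not representable.
   Context: All graphs are finite and simple. For a word $W$ over an alphabet, two distinct letters $x,y$ alternate in $W$ if both occur in $W$ and, after erasing all other letters from $W$, one obtains a word of the form $xyxy\ldots$ or $yxyx\ldots$ (an alternating word of any length). A graph $G=(V,E)$ is representable if there exists a word $W$ over the alphabet $V$ in which every vertex occurs, such that for all distinct $x,y\in V$, the letters $x$ and $y$ alternate in $W$ if and only if $(x,y)\in E$. The line graph $L(G)$ of a graph $G$ has the edges of $G$ as vertices, two of them being adjacent in $L(G)$ iff they share an endpoint in $G$. *)

theory Defs
  imports Main
begin

text \<open>A finite simple graph is given by a vertex set V and an edge set E,
  each edge being a two-element set {x,y} of vertices.\<close>

definition alternating_word :: "'a \<Rightarrow> 'a \<Rightarrow> 'a list \<Rightarrow> bool" where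
  "alternating_word x y w \<longleftrightarrow>
     w = map (\<lambda>i. if even i then x else y) [0..<length w] \<or>
     w = map (\<lambda>i. if even i then y else x) [0..<length w]"

definition alternate :: "'a list \<Rightarrow> 'a \<Rightarrow> 'a \<Rightarrow> bool" where
  "alternate W x y \<longleftrightarrow> x \<in> set W \<and> y \<in> set W \<and>
     alternating_word x y (filter (\<lambda>z. z = x \<or> z = y) W)"

definition representable :: "'a set \<Rightarrow> 'a set set \<Rightarrow> bool" where
  "representable V E \<longleftrightarrow> (\<exists>W. set W = V \<and>
     (\<forall>x\<in>V. \<forall>y\<in>V. x \<noteq> y \<longrightarrow> (alternate W x y \<longleftrightarrow> {x, y} \<in> E)))"

definition line_graph_edges :: "'a set set \<Rightarrow> 'a set set set" where
  "line_graph_edges E = {{e, f} | e f. e \<in> E \<and> f \<in> E \<and> e \<noteq> f \<and> e \<inter> f \<noteq> {}}"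

definition K_edges :: "nat \<Rightarrow> nat set set" where
  "K_edges n = {{i, j} | i j. i < n \<and> j < n \<and> i \<noteq> j}"

end

theory Submission imports Defs begin

definition cnt :: "'a list \<Rightarrow> 'a \<Rightarrow> nat" where
  "cnt w x = length (filter (\<lambda>z. z = x) w)"

definition DD :: "'a list \<Rightarrow> 'a \<Rightarrow> 'a \<Rightarrow> bool" where
  "DD W x y \<longleftrightarrow> (\<forall>p. cnt (take p W) y \<le> cnt (take p W) x \<and> cnt (take p W) x \<le> cnt (take p W) y + 1)"

abbreviation alt :: "'a \<Rightarrow> 'a \<Rightarrow> nat \<Rightarrow> 'a list" where
  "alt x y k \<equiv> map (\<lambda>i. if even i then x else y) [0..<k]"

lemma cnt_alt: "x \<noteq> y \<Longrightarrow> cnt (alt x y k) x = (k+1) div 2 \<and> cnt (alt x y k) y = k div 2"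
  by (induction k) (auto simp: cnt_def)

lemma take_upt0: "take q [0..<n] = [0..<min q n]"
  by (cases "q \<le> n") (auto simp: take_upt min_def)

lemma cnt_filter: "P x \<Longrightarrow> cnt (filter P w) x = cnt w x"
  unfolding cnt_def by (simp add: filter_filter) (metis (mono_tags, lifting) filter_cong)

lemma filter_take_prefix: "filter P (take p W) = take (length (filter P (take p W))) (filter P W)"
proof -
  have "filter P W = filter P (take p W) @ filter P (drop p W)"
    by (metis append_take_drop_id filter_append)
  then show ?thesis by (metis append_eq_conv_conj)
qed

lemma L1:
  assumes "x \<noteq> y" "alternate W x y"
  shows "DD W x y \<or> DD W y x"
proof -
  let ?P = "\<lambda>z. z = x \<or> z = y"
  define w where "w = filter ?P W"
  have cx: "cnt (take p W) x = cnt (take (length (filter ?P (take p W))) w) x" for p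
    using cnt_filter[of ?P x "take p W"] filter_take_prefix[of ?P p W] unfolding w_def by simp
  have cy: "cnt (take p W) y = cnt (take (length (filter ?P (take p W))) w) y" for p
    using cnt_filter[of ?P y "take p W"] filter_take_prefix[of ?P p W] unfolding w_def by simp
  from assms(2) have "alternating_word x y w" unfolding alternate_def w_def by simp
  then have "w = alt x y (length w) \<or> w = alt y x (length w)" unfolding alternating_word_def .
  then show ?thesis
  proof
    assume h: "w = alt x y (length w)"
    have "DD W x y" unfolding DD_def
    proof
      fix p
      define q where "q = length (filter ?P (take p W))"
      have t: "take q w = alt x y (min q (length w))"
        by (subst h) (simp add: take_map take_upt0)
      show "cnt (take p W) y \<le> cnt (take p W) x \<and> cnt (take p W) x \<le> cnt (take p W) y + 1"
        unfolding cx cy q_def[symmetric] t using cnt_alt[OF assms(1), of "min q (length w)"] by simp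
    qed
    then show ?thesis ..
  next
    assume h: "w = alt y x (length w)"
    have "DD W y x" unfolding DD_def
    proof
      fix p
      define q where "q = length (filter ?P (take p W))"
      have t: "take q w = alt y x (min q (length w))"
        by (subst h) (simp add: take_map take_upt0)
      show "cnt (take p W) x \<le> cnt (take p W) y \<and> cnt (take p W) y \<le> cnt (take p W) x + 1"
        unfolding cx cy q_def[symmetric] t using cnt_alt[OF assms(1)[symmetric], of "min q (length w)"] by simp
    qed
    then show ?thesis ..
  qed
qed

lemma A:
  assumes "x \<noteq> y" "DD W x y"
  shows "filter (\<lambda>z. z = x \<or> z = y) W = alt x y (length (filter (\<lambda>z. z = x \<or> z = y) W))"
  using assms(2)
proof (induction W rule: rev_induct)
  case Nil
  then show ?case by simp
next
  case (snoc z W)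
  have "DD W x y" unfolding DD_def
  proof
    fix p
    have "take (min p (length W)) (W @ [z]) = take p W" by (simp add: min_def)
    then show "cnt (take p W) y \<le> cnt (take p W) x \<and> cnt (take p W) x \<le> cnt (take p W) y + 1"
      using snoc.prems unfolding DD_def by metis
  qed
  note IH = snoc.IH[OF this]
  let ?P = "\<lambda>z. z = x \<or> z = y"
  define k where "k = length (filter ?P W)"
  have ck: "cnt W x = (k+1) div 2" "cnt W y = k div 2"
    using cnt_alt[OF assms(1), of k] cnt_filter[of ?P x W] cnt_filter[of ?P y W] IH unfolding k_def
    by auto
  have full: "cnt (W @ [z]) y \<le> cnt (W @ [z]) x \<and> cnt (W @ [z]) x \<le> cnt (W @ [z]) y + 1"
    using snoc.prems unfolding DD_def by (metis take_all order_refl)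
  show ?case
  proof (cases "?P z")
    case False
    then show ?thesis using IH by simp
  next
    case True
    then consider "z = x" | "z = y" by blast
    then show ?thesis
    proof cases
      case 1
      then have "even k" using full ck assms(1) by (simp add: cnt_def) presburger
      then show ?thesis using IH 1 unfolding k_def by simp
    next
      case 2
      then have "odd k" using full ck assms(1) by (simp add: cnt_def) presburger
      then show ?thesis using IH 2 unfolding k_def by simp
    qed
  qed
qed

lemma L2:
  assumes "x \<noteq> y" "DD W x y" "x \<in> set W" "y \<in> set W"
  shows "alternate W x y"
proof -
  have "filter (\<lambda>z. z = x \<or> z = y) W = alt x y (length (filter (\<lambda>z. z = x \<or> z = y) W))"
    by (rule A[OF assms(1,2)])
  then show ?thesis unfolding alternate_def alternating_word_def using assms(3,4) by blast
qed

lemma SC: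
  assumes "DD W a b" "DD W b c" "DD W c d" "DD W a d"
  shows "DD W a c \<and> DD W b d"
proof -
  have h: "cnt (take p W) b \<le> cnt (take p W) a \<and> cnt (take p W) a \<le> cnt (take p W) b + 1"
    "cnt (take p W) c \<le> cnt (take p W) b \<and> cnt (take p W) b \<le> cnt (take p W) c + 1"
    "cnt (take p W) d \<le> cnt (take p W) c \<and> cnt (take p W) c \<le> cnt (take p W) d + 1"
    "cnt (take p W) d \<le> cnt (take p W) a \<and> cnt (take p W) a \<le> cnt (take p W) d + 1" for p
    using assms unfolding DD_def by blast+
  have "DD W a c" unfolding DD_def
  proof
    fix p show "cnt (take p W) c \<le> cnt (take p W) a \<and> cnt (take p W) a \<le> cnt (take p W) c + 1"
      using h[of p] by linarith
  qed
  moreover have "DD W b d" unfolding DD_def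
  proof
    fix p show "cnt (take p W) d \<le> cnt (take p W) b \<and> cnt (take p W) b \<le> cnt (take p W) d + 1"
      using h[of p] by linarith
  qed
  ultimately show ?thesis ..
qed

lemma comb:
  fixes R :: "'a \<Rightarrow> 'a \<Rightarrow> bool"
  assumes sc: "\<And>a b c d. R a b \<Longrightarrow> R b c \<Longrightarrow> R c d \<Longrightarrow> R a d \<Longrightarrow> R a c \<and> R b d"
  and ne: "\<not> R pa qb" "\<not> R qb pa" "\<not> R pa qc" "\<not> R qc pa" "\<not> R pb qa" "\<not> R qa pb" "\<not> R pb qc" "\<not> R qc pb" "\<not> R pc qa" "\<not> R qa pc" "\<not> R pc qb" "\<not> R qb pc"
  and ed: "R pa pb \<or> R pb pa" "R pa pc \<or> R pc pa" "R pa qa \<or> R qa pa" "R pa x \<or> R x pa" "R pb pc \<or> R pc pb" "R pb qb \<or> R qb pb" "R pb x \<or> R x pb" "R pc qc \<or> R qc pc" "R pc x \<or> R x pc" "R qa qb \<or> R qb qa" "R qa qc \<or> R qc qa" "R qa x \<or> R x qa" "R qb qc \<or> R qc qb" "R qb x \<or> R x qb" "R qc x \<or> R x qc"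
  shows False
proof -
  have c0: "\<not> (R x pa \<and> R pa qa \<and> R qa qb \<and> R x qb)" using sc[of x pa qa qb] ne by blast
  have c1: "\<not> (R x pa \<and> R pa qa \<and> R qa qc \<and> R x qc)" using sc[of x pa qa qc] ne by blast
  have c2: "\<not> (R x pb \<and> R pb qb \<and> R qb qa \<and> R x qa)" using sc[of x pb qb qa] ne by blast
  have c3: "\<not> (R x pb \<and> R pb qb \<and> R qb qc \<and> R x qc)" using sc[of x pb qb qc] ne by blast
  have c4: "\<not> (R x pc \<and> R pc qc \<and> R qc qa \<and> R x qa)" using sc[of x pc qc qa] ne by blast
  have c5: "\<not> (R x pc \<and> R pc qc \<and> R qc qb \<and> R x qb)" using sc[of x pc qc qb] ne by blast
  have c6: "\<not> (R x qa \<and> R qa qb \<and> R qb pb \<and> R x pb)" using sc[of x qa qb pb] ne by blast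
  have c7: "\<not> (R x qa \<and> R qa qc \<and> R qc pc \<and> R x pc)" using sc[of x qa qc pc] ne by blast
  have c8: "\<not> (R x qb \<and> R qb qa \<and> R qa pa \<and> R x pa)" using sc[of x qb qa pa] ne by blast
  have c9: "\<not> (R x qb \<and> R qb qc \<and> R qc pc \<and> R x pc)" using sc[of x qb qc pc] ne by blast
  have c10: "\<not> (R x qc \<and> R qc qa \<and> R qa pa \<and> R x pa)" using sc[of x qc qa pa] ne by blast
  have c11: "\<not> (R x qc \<and> R qc qb \<and> R qb pb \<and> R x pb)" using sc[of x qc qb pb] ne by blast
  have c12: "\<not> (R pa x \<and> R x qb \<and> R qb qa \<and> R pa qa)" using sc[of pa x qb qa] ne by blast
  have c13: "\<not> (R pa x \<and> R x qc \<and> R qc qa \<and> R pa qa)" using sc[of pa x qc qa] ne by blast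
  have c14: "\<not> (R pa qa \<and> R qa qb \<and> R qb x \<and> R pa x)" using sc[of pa qa qb x] ne by blast
  have c15: "\<not> (R pa qa \<and> R qa qc \<and> R qc x \<and> R pa x)" using sc[of pa qa qc x] ne by blast
  have c16: "\<not> (R pb x \<and> R x qa \<and> R qa qb \<and> R pb qb)" using sc[of pb x qa qb] ne by blast
  have c17: "\<not> (R pb x \<and> R x qc \<and> R qc qb \<and> R pb qb)" using sc[of pb x qc qb] ne by blast
  have c18: "\<not> (R pb qb \<and> R qb qa \<and> R qa x \<and> R pb x)" using sc[of pb qb qa x] ne by blast
  have c19: "\<not> (R pb qb \<and> R qb qc \<and> R qc x \<and> R pb x)" using sc[of pb qb qc x] ne by blast
  have c20: "\<not> (R pc x \<and> R x qa \<and> R qa qc \<and> R pc qc)" using sc[of pc x qa qc] ne by blast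
  have c21: "\<not> (R pc x \<and> R x qb \<and> R qb qc \<and> R pc qc)" using sc[of pc x qb qc] ne by blast
  have c22: "\<not> (R pc qc \<and> R qc qa \<and> R qa x \<and> R pc x)" using sc[of pc qc qa x] ne by blast
  have c23: "\<not> (R pc qc \<and> R qc qb \<and> R qb x \<and> R pc x)" using sc[of pc qc qb x] ne by blast
  have c24: "\<not> (R qa x \<and> R x pb \<and> R pb qb \<and> R qa qb)" using sc[of qa x pb qb] ne by blast
  have c25: "\<not> (R qa x \<and> R x pc \<and> R pc qc \<and> R qa qc)" using sc[of qa x pc qc] ne by blast
  have c26: "\<not> (R qa pa \<and> R pa x \<and> R x qb \<and> R qa qb)" using sc[of qa pa x qb] ne by blast
  have c27: "\<not> (R qa pa \<and> R pa x \<and> R x qc \<and> R qa qc)" using sc[of qa pa x qc] ne by blast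
  have c28: "\<not> (R qa qb \<and> R qb x \<and> R x pa \<and> R qa pa)" using sc[of qa qb x pa] ne by blast
  have c29: "\<not> (R qa qb \<and> R qb pb \<and> R pb x \<and> R qa x)" using sc[of qa qb pb x] ne by blast
  have c30: "\<not> (R qa qc \<and> R qc x \<and> R x pa \<and> R qa pa)" using sc[of qa qc x pa] ne by blast
  have c31: "\<not> (R qa qc \<and> R qc pc \<and> R pc x \<and> R qa x)" using sc[of qa qc pc x] ne by blast
  have c32: "\<not> (R qb x \<and> R x pa \<and> R pa qa \<and> R qb qa)" using sc[of qb x pa qa] ne by blast
  have c33: "\<not> (R qb x \<and> R x pc \<and> R pc qc \<and> R qb qc)" using sc[of qb x pc qc] ne by blast
  have c34: "\<not> (R qb pb \<and> R pb x \<and> R x qa \<and> R qb qa)" using sc[of qb pb x qa] ne by blast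
  have c35: "\<not> (R qb pb \<and> R pb x \<and> R x qc \<and> R qb qc)" using sc[of qb pb x qc] ne by blast
  have c36: "\<not> (R qb qa \<and> R qa x \<and> R x pb \<and> R qb pb)" using sc[of qb qa x pb] ne by blast
  have c37: "\<not> (R qb qa \<and> R qa pa \<and> R pa x \<and> R qb x)" using sc[of qb qa pa x] ne by blast
  have c38: "\<not> (R qb qc \<and> R qc x \<and> R x pb \<and> R qb pb)" using sc[of qb qc x pb] ne by blast
  have c39: "\<not> (R qb qc \<and> R qc pc \<and> R pc x \<and> R qb x)" using sc[of qb qc pc x] ne by blast
  have c40: "\<not> (R qc x \<and> R x pa \<and> R pa qa \<and> R qc qa)" using sc[of qc x pa qa] ne by blast
  have c41: "\<not> (R qc x \<and> R x pb \<and> R pb qb \<and> R qc qb)" using sc[of qc x pb qb] ne by blast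
  have c42: "\<not> (R qc pc \<and> R pc x \<and> R x qa \<and> R qc qa)" using sc[of qc pc x qa] ne by blast
  have c43: "\<not> (R qc pc \<and> R pc x \<and> R x qb \<and> R qc qb)" using sc[of qc pc x qb] ne by blast
  have c44: "\<not> (R qc qa \<and> R qa x \<and> R x pc \<and> R qc pc)" using sc[of qc qa x pc] ne by blast
  have c45: "\<not> (R qc qa \<and> R qa pa \<and> R pa x \<and> R qc x)" using sc[of qc qa pa x] ne by blast
  have c46: "\<not> (R qc qb \<and> R qb x \<and> R x pc \<and> R qc pc)" using sc[of qc qb x pc] ne by blast
  have c47: "\<not> (R qc qb \<and> R qb pb \<and> R pb x \<and> R qc x)" using sc[of qc qb pb x] ne by blast
  show False using ed c0 c1 c2 c3 c4 c5 c6 c7 c8 c9 c10 c11 c12 c13 c14 c15 c16 c17 c18 c19 c20 c21 c22 c23 c24 c25 c26 c27 c28 c29 c30 c31 c32 c33 c34 c35 c36 c37 c38 c39 c40 c41 c42 c43 c44 c45 c46 c47 by smt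
qed

lemma LE:
  assumes "e \<noteq> f"
  shows "{e, f} \<in> line_graph_edges K \<longleftrightarrow> e \<in> K \<and> f \<in> K \<and> e \<inter> f \<noteq> {}"
proof
  assume "{e, f} \<in> line_graph_edges K"
  then obtain e' f' where "{e, f} = {e', f'}" "e' \<in> K" "f' \<in> K" "e' \<inter> f' \<noteq> {}"
    unfolding line_graph_edges_def by blast
  then show "e \<in> K \<and> f \<in> K \<and> e \<inter> f \<noteq> {}" by (auto simp: doubleton_eq_iff)
next
  assume "e \<in> K \<and> f \<in> K \<and> e \<inter> f \<noteq> {}"
  then show "{e, f} \<in> line_graph_edges K" using assms unfolding line_graph_edges_def by blast
qed

lemma Kmem: "i < n \<Longrightarrow> j < n \<Longrightarrow> i \<noteq> j \<Longrightarrow> {i, j} \<in> K_edges n"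
  unfolding K_edges_def by blast

theorem theorem3:
  fixes n :: nat
  assumes "n \<ge> 5"
  shows "\<not> representable (K_edges n) (line_graph_edges (K_edges n))"
proof
  assume "representable (K_edges n) (line_graph_edges (K_edges n))"
  then obtain W where sW: "set W = K_edges n" and
    rep: "\<forall>x\<in>K_edges n. \<forall>y\<in>K_edges n. x \<noteq> y \<longrightarrow> (alternate W x y \<longleftrightarrow> {x, y} \<in> line_graph_edges (K_edges n))"
    unfolding representable_def by blast
  have ed: "DD W u v \<or> DD W v u" if "u \<in> K_edges n" "v \<in> K_edges n" "u \<noteq> v" "u \<inter> v \<noteq> {}" for u v
  proof -
    have "{u, v} \<in> line_graph_edges (K_edges n)" using LE[OF that(3)] that by simp
    moreover have "alternate W u v \<longleftrightarrow> {u, v} \<in> line_graph_edges (K_edges n)"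
      using rep that(1,2,3) by simp
    ultimately show ?thesis using L1[OF that(3)] by simp
  qed
  have ne: "\<not> DD W u v" if "u \<in> K_edges n" "v \<in> K_edges n" "u \<noteq> v" "u \<inter> v = {}" for u v
  proof
    assume "DD W u v"
    then have "alternate W u v" using L2[OF that(3)] that(1,2) sW by simp
    moreover have "alternate W u v \<longleftrightarrow> {u, v} \<in> line_graph_edges (K_edges n)"
      using rep that(1,2,3) by simp
    moreover have "{u, v} \<notin> line_graph_edges (K_edges n)" using LE[OF that(3)] that(4) by simp
    ultimately show False by simp
  qed
  have m: "{i, j} \<in> K_edges n" if "i < 5" "j < 5" "i \<noteq> j" for i j
    using Kmem[of i n j] that assms by simp
  have k01: "{0,1} \<in> K_edges n" by (rule m) simp_all
  have k02: "{0,2} \<in> K_edges n" by (rule m) simp_all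
  have k03: "{0,3} \<in> K_edges n" by (rule m) simp_all
  have k04: "{0,4} \<in> K_edges n" by (rule m) simp_all
  have k12: "{1,2} \<in> K_edges n" by (rule m) simp_all
  have k13: "{1,3} \<in> K_edges n" by (rule m) simp_all
  have k14: "{1,4} \<in> K_edges n" by (rule m) simp_all
  have e_a1_x: "DD W {0,2} {0,1} \<or> DD W {0,1} {0,2}" by (rule ed[OF k02 k01]) (simp_all add: doubleton_eq_iff)
  have e_a1_a2: "DD W {0,2} {0,3} \<or> DD W {0,3} {0,2}" by (rule ed[OF k02 k03]) (simp_all add: doubleton_eq_iff)
  have e_a1_a3: "DD W {0,2} {0,4} \<or> DD W {0,4} {0,2}" by (rule ed[OF k02 k04]) (simp_all add: doubleton_eq_iff)
  have e_a1_b1: "DD W {0,2} {1,2} \<or> DD W {1,2} {0,2}" by (rule ed[OF k02 k12]) (simp_all add: doubleton_eq_iff)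
  have n_a1_b2: "\<not> DD W {0,2} {1,3}" by (rule ne[OF k02 k13]) (simp_all add: doubleton_eq_iff)
  have n_a1_b3: "\<not> DD W {0,2} {1,4}" by (rule ne[OF k02 k14]) (simp_all add: doubleton_eq_iff)
  have e_a2_x: "DD W {0,3} {0,1} \<or> DD W {0,1} {0,3}" by (rule ed[OF k03 k01]) (simp_all add: doubleton_eq_iff)
  have e_a2_a3: "DD W {0,3} {0,4} \<or> DD W {0,4} {0,3}" by (rule ed[OF k03 k04]) (simp_all add: doubleton_eq_iff)
  have n_a2_b1: "\<not> DD W {0,3} {1,2}" by (rule ne[OF k03 k12]) (simp_all add: doubleton_eq_iff)
  have e_a2_b2: "DD W {0,3} {1,3} \<or> DD W {1,3} {0,3}" by (rule ed[OF k03 k13]) (simp_all add: doubleton_eq_iff)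
  have n_a2_b3: "\<not> DD W {0,3} {1,4}" by (rule ne[OF k03 k14]) (simp_all add: doubleton_eq_iff)
  have e_a3_x: "DD W {0,4} {0,1} \<or> DD W {0,1} {0,4}" by (rule ed[OF k04 k01]) (simp_all add: doubleton_eq_iff)
  have n_a3_b1: "\<not> DD W {0,4} {1,2}" by (rule ne[OF k04 k12]) (simp_all add: doubleton_eq_iff)
  have n_a3_b2: "\<not> DD W {0,4} {1,3}" by (rule ne[OF k04 k13]) (simp_all add: doubleton_eq_iff)
  have e_a3_b3: "DD W {0,4} {1,4} \<or> DD W {1,4} {0,4}" by (rule ed[OF k04 k14]) (simp_all add: doubleton_eq_iff)
  have e_b1_x: "DD W {1,2} {0,1} \<or> DD W {0,1} {1,2}" by (rule ed[OF k12 k01]) (simp_all add: doubleton_eq_iff)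
  have n_b1_a2: "\<not> DD W {1,2} {0,3}" by (rule ne[OF k12 k03]) (simp_all add: doubleton_eq_iff)
  have n_b1_a3: "\<not> DD W {1,2} {0,4}" by (rule ne[OF k12 k04]) (simp_all add: doubleton_eq_iff)
  have e_b1_b2: "DD W {1,2} {1,3} \<or> DD W {1,3} {1,2}" by (rule ed[OF k12 k13]) (simp_all add: doubleton_eq_iff)
  have e_b1_b3: "DD W {1,2} {1,4} \<or> DD W {1,4} {1,2}" by (rule ed[OF k12 k14]) (simp_all add: doubleton_eq_iff)
  have e_b2_x: "DD W {1,3} {0,1} \<or> DD W {0,1} {1,3}" by (rule ed[OF k13 k01]) (simp_all add: doubleton_eq_iff)
  have n_b2_a1: "\<not> DD W {1,3} {0,2}" by (rule ne[OF k13 k02]) (simp_all add: doubleton_eq_iff)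
  have n_b2_a3: "\<not> DD W {1,3} {0,4}" by (rule ne[OF k13 k04]) (simp_all add: doubleton_eq_iff)
  have e_b2_b3: "DD W {1,3} {1,4} \<or> DD W {1,4} {1,3}" by (rule ed[OF k13 k14]) (simp_all add: doubleton_eq_iff)
  have e_b3_x: "DD W {1,4} {0,1} \<or> DD W {0,1} {1,4}" by (rule ed[OF k14 k01]) (simp_all add: doubleton_eq_iff)
  have n_b3_a1: "\<not> DD W {1,4} {0,2}" by (rule ne[OF k14 k02]) (simp_all add: doubleton_eq_iff)
  have n_b3_a2: "\<not> DD W {1,4} {0,3}" by (rule ne[OF k14 k03]) (simp_all add: doubleton_eq_iff)
  show False
    by (rule comb[where R="DD W" and x="{0,1}" and pa="{0,2}" and pb="{0,3}" and pc="{0,4}" and qa="{1,2}" and qb="{1,3}" and qc="{1,4}", OF SC[of W] n_a1_b2 n_b2_a1 n_a1_b3 n_b3_a1 n_a2_b1 n_b1_a2 n_a2_b3 n_b3_a2 n_a3_b1 n_b1_a3 n_a3_b2 n_b2_a3 e_a1_a2 e_a1_a3 e_a1_b1 e_a1_x e_a2_a3 e_a2_b2 e_a2_x e_a3_b3 e_a3_x e_b1_b2 e_b1_b3 e_b1_x e_b2_b3 e_b2_x e_b3_x])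
qed

end
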